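(* Let $\mathbb K$ be an infinite field, $\mathcal M,\mathcal N$ vector spaces over $\mathbb K$, and $f:\mathcal M_{\mathrm{nc}}\to\mathcal N_{\mathrm{nc}}$ a nc function which is polynomial on slices, with $f|_{\mathcal M^{n\times n}}$ polynomial on slices of degree $L_n$. Assume that the degrees $L_n$, $n=1,2,\dots$, are bounded. Then $f$ is a nc polynomial over $\mathcal M$ with coefficients in $\mathcal N$: there exist $L\in\mathbb N$ and $\ell$-linear mappings $p_\ell:\mathcal M^\ell\to\mathcal N$, $\ell=0,\dots,L$, such that $f(X)=\sum_{\ell=0}^LX^{\odot\ell}p_\ell$ for all $n$ and all $X\in\mathcal M^{n\times n}$.
   Context: $\mathcal M_{\mathrm{nc}}=\coprod_n\mathcal M^{n\times n}$; matrices over $\mathbb K$ act on matrices over $\mathcal M,\mathcal N$ by matrix multiplication. A nc function $f:\mathcal M_{\mathrm{nc}}\to\mathcal N_{\mathrm{nc}}$ satisfies $f(\mathcal M^{n\times n})\subseteq\mathcal N^{n\times n}$, $f(X\oplus Y)=f(X)\oplus f(Y)$ where $X\oplus Y=\begin{bmatrix}X&0\\0&Y\end{bmatrix}$, and $f(SXS^{-1})=Sf(X)S^{-1}$ for invertible $S\in\mathbb K^{n\times n}$. $f|_{\mathcal M^{n\times n}}$ is polynomial on slices of degree $L_n$ if for all $Y,Z\in\mathcal M^{n\times n}$, $t\mapsto f(Y+tZ)$ ($t\in\mathbb K$) is a polynomial in $t$ with coefficients in $\mathcal N^{n\times n}$ of degree at most $L_n$, with equality for some $Y,Z$; $f$ is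 polynomial on slices if this holds for every $n$ with some $L_n$. For $X=[X_{ij}]\in\mathcal M^{n\times n}$, $X^{\odot\ell}$ is the $n\times n$ matrix over $\mathcal M^{\otimes\ell}$ with $(i,k)$ entry $\sum_{j_1,\dots,j_{\ell-1}}X_{ij_1}\otimes\cdots\otimes X_{j_{\ell-1}k}$, and $X^{\odot\ell}p_\ell\in\mathcal N^{n\times n}$ applies the linear map $\mathcal M^{\otimes\ell}\to\mathcal N$ induced by $p_\ell$ entrywise; $X^{\odot0}p_0=I_np_0$ for $p_0\in\mathcal N$. *)

theory Defs
  imports Complex_Main
begin

text \<open>An n x n matrix over a type 'a is represented as a function nat => nat => 'a
  which vanishes outside the index range {..<n} x {..<n}.\<close>

definition mats :: "nat \<Rightarrow> (nat \<Rightarrow> nat \<Rightarrow> 'a::zero) set" where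
  "mats n = {X. \<forall>i j. \<not> (i < n \<and> j < n) \<longrightarrow> X i j = 0}"

definition dsum :: "nat \<Rightarrow> nat \<Rightarrow> (nat \<Rightarrow> nat \<Rightarrow> 'a::zero) \<Rightarrow> (nat \<Rightarrow> nat \<Rightarrow> 'a) \<Rightarrow> (nat \<Rightarrow> nat \<Rightarrow> 'a)" where
  "dsum n m X Y = (\<lambda>i j. if i < n \<and> j < n then X i j
      else if n \<le> i \<and> n \<le> j \<and> i < n + m \<and> j < n + m then Y (i - n) (j - n) else 0)"

definition kmul :: "nat \<Rightarrow> (nat \<Rightarrow> nat \<Rightarrow> 'k::field) \<Rightarrow> (nat \<Rightarrow> nat \<Rightarrow> 'k) \<Rightarrow> (nat \<Rightarrow> nat \<Rightarrow> 'k)" where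
  "kmul n S T = (\<lambda>i j. if i < n \<and> j < n then (\<Sum>k<n. S i k * T k j) else 0)"

definition kid :: "nat \<Rightarrow> (nat \<Rightarrow> nat \<Rightarrow> 'k::field)" where
  "kid n = (\<lambda>i j. if i < n \<and> j < n \<and> i = j then 1 else 0)"

definition inverse_pair :: "nat \<Rightarrow> (nat \<Rightarrow> nat \<Rightarrow> 'k::field) \<Rightarrow> (nat \<Rightarrow> nat \<Rightarrow> 'k) \<Rightarrow> bool" where
  "inverse_pair n S T \<longleftrightarrow> S \<in> mats n \<and> T \<in> mats n \<and> kmul n S T = kid n \<and> kmul n T S = kid n"

definition lact :: "('k::field \<Rightarrow> 'm \<Rightarrow> 'm::ab_group_add) \<Rightarrow> nat \<Rightarrow> (nat \<Rightarrow> nat \<Rightarrow> 'k) \<Rightarrow> (nat \<Rightarrow> nat \<Rightarrow> 'm) \<Rightarrow> (nat \<Rightarrow> nat \<Rightarrow> 'm)" where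
  "lact sc n S X = (\<lambda>i j. if i < n \<and> j < n then (\<Sum>k<n. sc (S i k) (X k j)) else 0)"

definition ract :: "('k::field \<Rightarrow> 'm \<Rightarrow> 'm::ab_group_add) \<Rightarrow> nat \<Rightarrow> (nat \<Rightarrow> nat \<Rightarrow> 'm) \<Rightarrow> (nat \<Rightarrow> nat \<Rightarrow> 'k) \<Rightarrow> (nat \<Rightarrow> nat \<Rightarrow> 'm)" where
  "ract sc n X S = (\<lambda>i j. if i < n \<and> j < n then (\<Sum>k<n. sc (S k j) (X i k)) else 0)"

definition nc_function ::
  "('k::field \<Rightarrow> 'm \<Rightarrow> 'm::ab_group_add) \<Rightarrow> ('k \<Rightarrow> 'n \<Rightarrow> 'n::ab_group_add)
   \<Rightarrow> (nat \<Rightarrow> (nat \<Rightarrow> nat \<Rightarrow> 'm) \<Rightarrow> (nat \<Rightarrow> nat \<Rightarrow> 'n)) \<Rightarrow> bool" where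
  "nc_function scM scN f \<longleftrightarrow>
     (\<forall>n>0. \<forall>X\<in>mats n. f n X \<in> mats n) \<and>
     (\<forall>n>0. \<forall>m>0. \<forall>X\<in>mats n. \<forall>Y\<in>mats m. f (n + m) (dsum n m X Y) = dsum n m (f n X) (f m Y)) \<and>
     (\<forall>n>0. \<forall>S T. \<forall>X\<in>mats n. inverse_pair n S T \<longrightarrow>
         f n (ract scM n (lact scM n S X) T) = ract scN n (lact scN n S (f n X)) T)"

definition slice_poly ::
  "('k::field \<Rightarrow> 'm \<Rightarrow> 'm::ab_group_add) \<Rightarrow> ('k \<Rightarrow> 'n \<Rightarrow> 'n::ab_group_add)
   \<Rightarrow> (nat \<Rightarrow> (nat \<Rightarrow> nat \<Rightarrow> 'm) \<Rightarrow> (nat \<Rightarrow> nat \<Rightarrow> 'n)) \<Rightarrow> nat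
   \<Rightarrow> (nat \<Rightarrow> nat \<Rightarrow> 'm) \<Rightarrow> (nat \<Rightarrow> nat \<Rightarrow> 'm) \<Rightarrow> nat \<Rightarrow> (nat \<Rightarrow> nat \<Rightarrow> nat \<Rightarrow> 'n) \<Rightarrow> bool" where
  "slice_poly scM scN f n Y Z L c \<longleftrightarrow>
     (\<forall>k. c k \<in> mats n) \<and>
     (\<forall>t. f n (\<lambda>i j. Y i j + scM t (Z i j)) = (\<lambda>i j. \<Sum>k\<le>L. scN (t ^ k) (c k i j)))"

text \<open>f restricted to level n is polynomial on slices of degree L: every slice is a polynomial
  of degree at most L, with equality for some slice (for L = 0 the equality clause is read as
  automatically satisfied, so that the zero polynomial has degree 0).\<close>
definition poly_on_slices_deg ::
  "('k::field \<Rightarrow> 'm \<Rightarrow> 'm::ab_group_add) \<Rightarrow> ('k \<Rightarrow> 'n \<Rightarrow> 'n::ab_group_add)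
   \<Rightarrow> (nat \<Rightarrow> (nat \<Rightarrow> nat \<Rightarrow> 'm) \<Rightarrow> (nat \<Rightarrow> nat \<Rightarrow> 'n)) \<Rightarrow> nat \<Rightarrow> nat \<Rightarrow> bool" where
  "poly_on_slices_deg scM scN f n L \<longleftrightarrow>
     (\<forall>Y\<in>mats n. \<forall>Z\<in>mats n. \<exists>c. slice_poly scM scN f n Y Z L c) \<and>
     (L = 0 \<or> (\<exists>Y\<in>mats n. \<exists>Z\<in>mats n. \<exists>c. slice_poly scM scN f n Y Z L c \<and> c L \<noteq> (\<lambda>i j. 0)))"

text \<open>An l-linear map M^l -> N, represented on lists of length l.\<close>
definition multilinear ::
  "('k::field \<Rightarrow> 'm \<Rightarrow> 'm::ab_group_add) \<Rightarrow> ('k \<Rightarrow> 'n \<Rightarrow> 'n::ab_group_add) \<Rightarrow> nat \<Rightarrow> ('m list \<Rightarrow> 'n) \<Rightarrow> bool" where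
  "multilinear scM scN l p \<longleftrightarrow>
     (\<forall>i<l. \<forall>xs. length xs = l \<longrightarrow> Vector_Spaces.linear scM scN (\<lambda>v. p (xs[i := v])))"

definition chain :: "(nat \<Rightarrow> nat \<Rightarrow> 'm) \<Rightarrow> nat list \<Rightarrow> 'm list" where
  "chain X js = map (\<lambda>t. X (js ! t) (js ! Suc t)) [0..<length js - 1]"

text \<open>X^{odot l} p: the (i,k) entry is the sum over j1..j(l-1) < n of
  p(X_{i j1}, ..., X_{j(l-1) k}); for l = 0 this gives I_n p.\<close>
definition odot :: "nat \<Rightarrow> nat \<Rightarrow> (nat \<Rightarrow> nat \<Rightarrow> 'm) \<Rightarrow> ('m list \<Rightarrow> 'n::comm_monoid_add) \<Rightarrow> (nat \<Rightarrow> nat \<Rightarrow> 'n)" where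
  "odot n l X p = (\<lambda>i k. if i < n \<and> k < n then
      (\<Sum>js\<in>{js. length js = Suc l \<and> set js \<subseteq> {..<n} \<and> hd js = i \<and> last js = k}. p (chain X js))
      else 0)"

end

theory Submission
  imports Defs
begin

lemma sum_delta_lt: "i < (N::nat) \<Longrightarrow> (\<Sum>k<N. if k = i then g k else 0) = g i"
  by (simp add: sum.delta)

lemma sum_kid_left: "i < N \<Longrightarrow> (\<Sum>k<N. kid N i k * g k) = g i"
proof -
  assume i: "i < N"
  have "(\<Sum>k<N. kid N i k * g k) = (\<Sum>k<N. if k = i then g k else 0)"
    by (rule sum.cong) (auto simp: kid_def i)
  thus ?thesis using i by (simp add: sum.delta)
qed

lemma sum_kid_right: "j < N \<Longrightarrow> (\<Sum>k<N. g k * kid N k j) = g j"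
proof -
  assume j: "j < N"
  have "(\<Sum>k<N. g k * kid N k j) = (\<Sum>k<N. if k = j then g k else 0)"
    by (rule sum.cong) (auto simp: kid_def j)
  thus ?thesis using j by (simp add: sum.delta)
qed

definition Emat :: "nat \<Rightarrow> nat \<Rightarrow> 'k \<Rightarrow> (nat\<Rightarrow>nat\<Rightarrow>'k) \<Rightarrow> (nat\<Rightarrow>nat\<Rightarrow>'k::field)" where
 "Emat m N c T = (\<lambda>i j. kid N i j + (if i < m \<and> m \<le> j \<and> j < N then c * T i (j - m) else 0))"

lemma kmul_Emat:
  assumes "m \<le> N"
  shows "kmul N (Emat m N c T) (Emat m N d T) = Emat m N (c+d) T"
proof (rule ext, rule ext)
  fix i j
  show "kmul N (Emat m N c T) (Emat m N d T) i j = Emat m N (c+d) T i j"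
  proof (cases "i < N \<and> j < N")
    case False then show ?thesis by (auto simp: kmul_def Emat_def kid_def)
  next
    case True
    have "kmul N (Emat m N c T) (Emat m N d T) i j =
      (\<Sum>k<N. kid N i k * kid N k j) + (\<Sum>k<N. kid N i k * (if k < m \<and> m \<le> j \<and> j < N then d * T k (j - m) else 0))
      + (\<Sum>k<N. (if i < m \<and> m \<le> k \<and> k < N then c * T i (k - m) else 0) * kid N k j)
      + (\<Sum>k<N. (if i < m \<and> m \<le> k \<and> k < N then c * T i (k - m) else 0) * (if k < m \<and> m \<le> j \<and> j < N then d * T k (j - m) else 0))"
      using True by (simp add: kmul_def Emat_def algebra_simps sum.distrib)
    also have "(\<Sum>k<N. (if i < m \<and> m \<le> k \<and> k < N then c * T i (k - m) else 0) * (if k < m \<and> m \<le> j \<and> j < N then d * T k (j - m) else 0)) = 0"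
      by (rule sum.neutral) auto
    also have "(\<Sum>k<N. kid N i k * kid N k j) = kid N i j"
      using True by (simp only: sum_kid_left)
    also have "(\<Sum>k<N. kid N i k * (if k < m \<and> m \<le> j \<and> j < N then d * T k (j - m) else 0))
       = (if i < m \<and> m \<le> j \<and> j < N then d * T i (j - m) else 0)"
      using True by (simp only: sum_kid_left)
    also have "(\<Sum>k<N. (if i < m \<and> m \<le> k \<and> k < N then c * T i (k - m) else 0) * kid N k j)
       = (if i < m \<and> m \<le> j \<and> j < N then c * T i (j - m) else 0)"
      using True by (simp only: sum_kid_right)
    finally show ?thesis using True by (simp add: Emat_def algebra_simps)
  qed
qed

lemma Emat_0: "Emat m N 0 T = kid N" by (simp add: Emat_def fun_eq_iff)

lemma Emat_mats: "Emat m N c T \<in> mats N"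
  by (simp add: mats_def Emat_def kid_def)

lemma inverse_pair_Emat:
  assumes "m \<le> N" shows "inverse_pair N (Emat m N 1 T) (Emat m N (-1) T)"
  using kmul_Emat[OF assms, of 1 T "-1"] kmul_Emat[OF assms, of "-1" T 1]
  by (simp add: inverse_pair_def Emat_mats Emat_0)

context vector_space begin

lemma sum_kid_scale: "i < N \<Longrightarrow> (\<Sum>k<N. kid N i k *s g k) = g i"
proof -
  assume i: "i < N"
  have "(\<Sum>k<N. kid N i k *s g k) = (\<Sum>k<N. if k = i then g k else 0)"
    by (rule sum.cong) (auto simp: kid_def i)
  thus ?thesis using i by (simp add: sum.delta)
qed

lemma sum_kid_scale2: "j < N \<Longrightarrow> (\<Sum>k<N. kid N k j *s g k) = g j"
proof -
  assume i: "j < N"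
  have "(\<Sum>k<N. kid N k j *s g k) = (\<Sum>k<N. if k = j then g k else 0)"
    by (rule sum.cong) (auto simp: kid_def i)
  thus ?thesis using i by (simp add: sum.delta)
qed

lemma lact_Emat:
  assumes "m \<le> N"
  shows "lact scale N (Emat m N c T) Z i j = (if i<N \<and> j<N then Z i j +
     (if i<m then (\<Sum>k\<in>{m..<N}. (c * T i (k-m)) *s Z k j) else 0) else 0)"
proof (cases "i<N \<and> j<N")
  case True
  have "lact scale N (Emat m N c T) Z i j = (\<Sum>k<N. kid N i k *s Z k j) +
     (\<Sum>k<N. (if i < m \<and> m \<le> k \<and> k < N then c * T i (k - m) else 0) *s Z k j)"
    using True by (simp add: lact_def Emat_def scale_left_distrib sum.distrib)
  also have "(\<Sum>k<N. kid N i k *s Z k j) = Z i j" using True by (simp add: sum_kid_scale)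
  also have "(\<Sum>k<N. (if i < m \<and> m \<le> k \<and> k < N then c * T i (k - m) else 0) *s Z k j)
     = (\<Sum>k<N. if i < m \<and> m \<le> k then (c * T i (k - m)) *s Z k j else 0)"
    by (rule sum.cong) auto
  also have "\<dots> = (if i<m then (\<Sum>k\<in>{m..<N}. (c * T i (k-m)) *s Z k j) else 0)"
  proof (cases "i < m")
    case True
    have "(\<Sum>k<N. if m \<le> k then (c * T i (k - m)) *s Z k j else 0) = (\<Sum>k\<in>{k\<in>{..<N}. m \<le> k}. (c * T i (k - m)) *s Z k j)"
      by (rule sum.inter_filter[symmetric]) simp
    also have "{k\<in>{..<N}. m \<le> k} = {m..<N}" by auto
    finally show ?thesis using True by simp
  qed simp
  finally show ?thesis using True by simp
qed (auto simp: lact_def)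

lemma ract_Emat:
  assumes "m \<le> N"
  shows "ract scale N Z (Emat m N d T) i j = (if i<N \<and> j<N then Z i j +
     (if m \<le> j then (\<Sum>k<m. (d * T k (j-m)) *s Z i k) else 0) else 0)"
proof (cases "i<N \<and> j<N")
  case True
  have "ract scale N Z (Emat m N d T) i j = (\<Sum>k<N. kid N k j *s Z i k) +
     (\<Sum>k<N. (if k < m \<and> m \<le> j \<and> j < N then d * T k (j - m) else 0) *s Z i k)"
    using True by (simp add: ract_def Emat_def scale_left_distrib sum.distrib)
  also have "(\<Sum>k<N. kid N k j *s Z i k) = Z i j" using True by (simp add: sum_kid_scale2)
  also have "(\<Sum>k<N. (if k < m \<and> m \<le> j \<and> j < N then d * T k (j - m) else 0) *s Z i k)
     = (\<Sum>k<N. if k < m \<and> m \<le> j then (d * T k (j - m)) *s Z i k else 0)"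
    using True by (intro sum.cong) auto
  also have "\<dots> = (if m \<le> j then (\<Sum>k<m. (d * T k (j-m)) *s Z i k) else 0)"
  proof (cases "m \<le> j")
    case True
    have "(\<Sum>k<N. if k < m then (d * T k (j - m)) *s Z i k else 0) = (\<Sum>k\<in>{k\<in>{..<N}. k < m}. (d * T k (j - m)) *s Z i k)"
      by (rule sum.inter_filter[symmetric]) simp
    also have "{k\<in>{..<N}. k < m} = {..<m}" using assms by auto
    finally show ?thesis using True by simp
  qed simp
  finally show ?thesis using True by simp
qed (auto simp: ract_def)

end

lemma sum_shift_ivl: "(\<Sum>k\<in>{m..<m+m'::nat}. g k) = (\<Sum>k<m'. g (m + k))"
  using sum.shift_bounds_nat_ivl[of g 0 m m'] by (simp add: lessThan_atLeast0 add.commute)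

context vector_space begin

lemma conj_dsum:
  assumes P: "P \<in> mats m" and Q: "Q \<in> mats m'"
  shows "ract scale (m+m') (lact scale (m+m') (Emat m (m+m') 1 T) (dsum m m' P Q)) (Emat m (m+m') (-1) T) i j
    = (if i<m+m' \<and> j<m+m' then (if i<m \<and> m \<le> j then (\<Sum>k<m'. T i k *s Q k (j-m)) - (\<Sum>k<m. T k (j-m) *s P i k)
        else dsum m m' P Q i j) else 0)"
proof -
  let ?N = "m+m'"
  let ?Z = "dsum m m' P Q"
  have W: "lact scale ?N (Emat m ?N 1 T) ?Z i' j' = (if i'<?N \<and> j'<?N then ?Z i' j' +
     (if i'<m then (\<Sum>k<m'. T i' k *s ?Z (m+k) j') else 0) else 0)" for i' j'
    by (simp add: lact_Emat sum_shift_ivl)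
  have Zlow: "?Z (m+k) j' = (if k < m' \<and> m \<le> j' \<and> j' < ?N then Q k (j'-m) else 0)" for k j'
    by (auto simp: dsum_def)
  show ?thesis
  proof (cases "i<?N \<and> j<?N")
    case False then show ?thesis by (auto simp: ract_Emat)
  next
    case True
    note ij = True
    show ?thesis
    proof (cases "m \<le> j")
      case False
      have "(\<Sum>k<m'. T i k *s ?Z (m+k) j) = 0" using False by (intro sum.neutral) (auto simp: Zlow)
      then show ?thesis using False True by (simp add: ract_Emat W)
    next
      case mj: True
      show ?thesis
      proof (cases "i < m")
        case False
        have "(\<Sum>k<m. (- 1 * T k (j - m)) *s lact scale ?N (Emat m ?N 1 T) ?Z i k) = 0"
          using False ij by (intro sum.neutral ballI) (simp add: W, simp add: dsum_def)
        then show ?thesis using False ij mj by (simp add: ract_Emat W)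
      next
        case im: True
        have 1: "lact scale ?N (Emat m ?N 1 T) ?Z i j = (\<Sum>k<m'. T i k *s Q k (j-m))"
          using im mj ij by (simp add: W Zlow, simp add: dsum_def)
        have 2: "lact scale ?N (Emat m ?N 1 T) ?Z i k = P i k" if "k < m" for k
        proof -
          have "(\<Sum>k'<m'. T i k' *s ?Z (m+k') k) = 0" using that by (intro sum.neutral) (auto simp: Zlow)
          thus ?thesis using that im by (simp add: W Zlow, simp add: dsum_def)
        qed
        have "(\<Sum>k<m. (- 1 * T k (j - m)) *s lact scale ?N (Emat m ?N 1 T) ?Z i k)
            = - (\<Sum>k<m. T k (j-m) *s P i k)"
          by (simp add: 2 sum_negf[symmetric])
        then show ?thesis using im mj ij 1 by (simp add: ract_Emat)
      qed
    qed
  qed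
qed

end

locale ncs = M: vector_space scM + N: vector_space scN
  for scM :: "'k::field \<Rightarrow> 'm::ab_group_add \<Rightarrow> 'm" and scN :: "'k \<Rightarrow> 'n::ab_group_add \<Rightarrow> 'n" +
  fixes f :: "nat \<Rightarrow> (nat \<Rightarrow> nat \<Rightarrow> 'm) \<Rightarrow> (nat \<Rightarrow> nat \<Rightarrow> 'n)"
  assumes nc: "nc_function scM scN f"
begin

lemma f_mats: "n > 0 \<Longrightarrow> X \<in> mats n \<Longrightarrow> f n X \<in> mats n"
  using nc by (auto simp: nc_function_def)

lemma dsum_mats: "P \<in> mats m \<Longrightarrow> Q \<in> mats m' \<Longrightarrow> dsum m m' P Q \<in> mats (m+m')"
  by (auto simp: mats_def dsum_def)

lemma intertwine:
  assumes m: "m > 0" and m': "m' > 0" and A: "A \<in> mats m" and C: "C \<in> mats m'"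
  and hyp: "\<And>i j. i<m \<Longrightarrow> j<m' \<Longrightarrow> (\<Sum>k<m. scM (T k j) (A i k)) = (\<Sum>k<m'. scM (T i k) (C k j))"
  and i: "i < m" and j: "j < m'"
  shows "(\<Sum>k<m. scN (T k j) (f m A i k)) = (\<Sum>k<m'. scN (T i k) (f m' C k j))"
proof -
  let ?N = "m+m'"
  let ?X = "dsum m m' A C"
  have X: "?X \<in> mats ?N" using A C by (rule dsum_mats)
  have eq1: "ract scM ?N (lact scM ?N (Emat m ?N 1 T) ?X) (Emat m ?N (-1) T) = ?X"
  proof (intro ext)
    fix i' j'
    show "ract scM ?N (lact scM ?N (Emat m ?N 1 T) ?X) (Emat m ?N (-1) T) i' j' = ?X i' j'"
      by (subst M.conj_dsum[OF A C]) (use hyp[of i' "j' - m"] in \<open>auto simp: dsum_def\<close>)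
  qed
  have inv: "inverse_pair ?N (Emat m ?N 1 T) (Emat m ?N (-1) T)" by (rule inverse_pair_Emat) simp
  have fX: "f ?N ?X = dsum m m' (f m A) (f m' C)"
    using nc m m' A C by (auto simp: nc_function_def)
  have "f ?N ?X = ract scN ?N (lact scN ?N (Emat m ?N 1 T) (f ?N ?X)) (Emat m ?N (-1) T)"
    using nc X inv m by (subst (1) eq1[symmetric]) (auto simp: nc_function_def)
  hence "f ?N ?X i (m+j) = ract scN ?N (lact scN ?N (Emat m ?N 1 T) (f ?N ?X)) (Emat m ?N (-1) T) i (m+j)"
    by simp
  also have "\<dots> = (\<Sum>k<m'. scN (T i k) (f m' C k j)) - (\<Sum>k<m. scN (T k j) (f m A i k))"
    unfolding fX using i j by (subst N.conj_dsum[OF f_mats[OF m A] f_mats[OF m' C]]) simp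
  finally have c: "f ?N ?X i (m+j) = (\<Sum>k<m'. scN (T i k) (f m' C k j)) - (\<Sum>k<m. scN (T k j) (f m A i k))" .
  have z: "f ?N ?X i (m+j) = 0" using i by (simp only: fX) (auto simp add: dsum_def)
  show ?thesis using c z by (metis eq_iff_diff_eq_0)
qed

end

definition matv :: "('v \<Rightarrow> nat) \<Rightarrow> 'v set \<Rightarrow> ('v \<Rightarrow> 'v \<Rightarrow> 'a::zero) \<Rightarrow> nat \<Rightarrow> nat \<Rightarrow> 'a" where
  "matv e V W = (\<lambda>i j. if i < card V \<and> j < card V then W (inv_into V e i) (inv_into V e j) else 0)"

lemma matv_mats: "matv e V W \<in> mats (card V)" by (simp add: matv_def mats_def)

lemma sum_bij_inv:
  assumes "bij_betw e V {..<card V}"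
  shows "(\<Sum>k<card V. g (inv_into V e k)) = (\<Sum>u\<in>V. g u)"
  using sum.reindex_bij_betw[OF bij_betw_inv_into[OF assms], of g] by simp

lemma bij_inv_e: "bij_betw e V {..<card V} \<Longrightarrow> u \<in> V \<Longrightarrow> inv_into V e (e u) = u"
  by (simp add: bij_betw_def)

lemma bij_e_lt: "bij_betw e V {..<card V} \<Longrightarrow> u \<in> V \<Longrightarrow> e u < card V"
  by (auto simp: bij_betw_def)

lemma matv_e: "bij_betw e V {..<card V} \<Longrightarrow> u \<in> V \<Longrightarrow> v \<in> V \<Longrightarrow> matv e V W (e u) (e v) = W u v"
  by (simp add: matv_def bij_inv_e bij_e_lt)

lemma bij_id_lessThan: "bij_betw id {..<n} {..<card {..<n::nat}}" by simp

lemma inv_id_lt: "i < n \<Longrightarrow> inv_into {..<n} id i = i"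
  unfolding inv_into_def by (rule some_equality) auto

lemma matv_id: "X \<in> mats n \<Longrightarrow> matv id {..<n} X = X"
  by (auto simp: matv_def mats_def fun_eq_iff inv_id_lt)

lemma e_inv: "bij_betw e V {..<card V} \<Longrightarrow> x < card V \<Longrightarrow> e (inv_into V e x) = x"
  by (metis bij_betw_def f_inv_into_f lessThan_iff)

context ncs begin

definition Fv :: "('v \<Rightarrow> nat) \<Rightarrow> 'v set \<Rightarrow> ('v \<Rightarrow> 'v \<Rightarrow> 'm) \<Rightarrow> 'v \<Rightarrow> 'v \<Rightarrow> 'n" where
  "Fv e V W u v = f (card V) (matv e V W) (e u) (e v)"

lemma Fv_id: "X \<in> mats n \<Longrightarrow> Fv id {..<n} X i j = f n X i j"
  by (simp add: Fv_def matv_id)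

lemma intertwine_V:
  assumes V: "finite V" "V \<noteq> {}" "bij_betw e V {..<card V}"
  and V': "finite V'" "V' \<noteq> {}" "bij_betw e' V' {..<card V'}"
  and hyp: "\<And>u v. u\<in>V \<Longrightarrow> v\<in>V' \<Longrightarrow> (\<Sum>u'\<in>V. scM (T u' v) (W u u')) = (\<Sum>v'\<in>V'. scM (T u v') (W' v' v))"
  and uv: "u \<in> V" "v \<in> V'"
  shows "(\<Sum>u'\<in>V. scN (T u' v) (Fv e V W u u')) = (\<Sum>v'\<in>V'. scN (T u v') (Fv e' V' W' v' v))"
proof -
  let ?T = "\<lambda>i j. T (inv_into V e i) (inv_into V' e' j)"
  have m: "card V > 0" "card V' > 0" using V V' by (auto simp: card_gt_0_iff)
  have "(\<Sum>k<card V. scN (?T k (e' v)) (f (card V) (matv e V W) (e u) k)) =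
        (\<Sum>k<card V'. scN (?T (e u) k) (f (card V') (matv e' V' W') k (e' v)))"
  proof (rule intertwine[OF m matv_mats matv_mats])
    fix i j assume i: "i < card V" and j: "j < card V'"
    have iV: "inv_into V e i \<in> V" using i V(3) by (metis bij_betw_def bij_betw_inv_into inv_into_into lessThan_iff)
    have jV: "inv_into V' e' j \<in> V'" using j V'(3) by (metis bij_betw_def bij_betw_inv_into inv_into_into lessThan_iff)
    have "(\<Sum>k<card V. scM (?T k j) (matv e V W i k)) = (\<Sum>u'\<in>V. scM (T u' (inv_into V' e' j)) (W (inv_into V e i) u'))"
      using i by (subst sum_bij_inv[OF V(3), symmetric]) (simp add: matv_def)
    also have "\<dots> = (\<Sum>v'\<in>V'. scM (T (inv_into V e i) v') (W' v' (inv_into V' e' j)))"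
      using hyp[OF iV jV] .
    also have "\<dots> = (\<Sum>k<card V'. scM (?T i k) (matv e' V' W' k j))"
      using j by (subst sum_bij_inv[OF V'(3), symmetric]) (simp add: matv_def)
    finally show "(\<Sum>k<card V. scM (?T k j) (matv e V W i k)) = (\<Sum>k<card V'. scM (?T i k) (matv e' V' W' k j))" .
  qed (use uv V V' in \<open>auto simp: bij_e_lt\<close>)
  moreover have "(\<Sum>k<card V. scN (?T k (e' v)) (f (card V) (matv e V W) (e u) k)) = (\<Sum>u'\<in>V. scN (T u' v) (Fv e V W u u'))"
    by (subst sum_bij_inv[OF V(3), symmetric]) (auto simp add: Fv_def bij_inv_e[OF V'(3) uv(2)] e_inv[OF V(3)] intro!: sum.cong)
  moreover have "(\<Sum>k<card V'. scN (?T (e u) k) (f (card V') (matv e' V' W') k (e' v))) = (\<Sum>v'\<in>V'. scN (T u v') (Fv e' V' W' v' v))"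
    by (subst sum_bij_inv[OF V'(3), symmetric]) (auto simp add: Fv_def bij_inv_e[OF V(3) uv(1)] e_inv[OF V'(3)] intro!: sum.cong)
  ultimately show ?thesis by simp
qed

end

context vector_space begin
lemma if_scale: "(if P then c else 0) *s x = (if P then c *s x else 0)" by simp
lemma sum_ind_scale: "finite A \<Longrightarrow> (\<Sum>a\<in>A. (if P a then 1 else 0) *s g a) = (\<Sum>a\<in>{a\<in>A. P a}. g a)"
  by (simp add: sum.inter_filter if_scale cong: if_cong)
lemma sum_delta_scale: "finite A \<Longrightarrow> b \<in> A \<Longrightarrow> (\<Sum>a\<in>A. (if a = b then c a else 0) *s g a) = c b *s g b"
  by (simp only: if_scale sum.delta) simp
lemma sum_delta_scale': "finite A \<Longrightarrow> b \<in> A \<Longrightarrow> (\<Sum>a\<in>A. (if b = a then c a else 0) *s g a) = c b *s g b"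
  by (simp only: if_scale sum.delta') simp
end

context ncs begin

lemma fibration_V:
  assumes V: "finite V" "V \<noteq> {}" "bij_betw e V {..<card V}"
  and V': "finite V'" "V' \<noteq> {}" "bij_betw e' V' {..<card V'}"
  and phi: "\<And>u. u \<in> V \<Longrightarrow> \<phi> u \<in> V'"
  and hyp: "\<And>u v. u\<in>V \<Longrightarrow> v\<in>V' \<Longrightarrow> (\<Sum>u'\<in>{u'\<in>V. \<phi> u' = v}. W u u') = W' (\<phi> u) v"
  and uv: "u \<in> V" "v \<in> V'"
  shows "(\<Sum>u'\<in>{u'\<in>V. \<phi> u' = v}. Fv e V W u u') = Fv e' V' W' (\<phi> u) v"
proof -
  have "(\<Sum>u'\<in>V. scN (if \<phi> u' = v then 1 else 0) (Fv e V W u u')) =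
        (\<Sum>v'\<in>V'. scN (if \<phi> u = v' then 1 else 0) (Fv e' V' W' v' v))"
  proof (rule intertwine_V[OF V V' _ uv])
    fix u v assume u: "u\<in>V" and v: "v\<in>V'"
    show "(\<Sum>u'\<in>V. scM (if \<phi> u' = v then 1 else 0) (W u u')) =
          (\<Sum>v'\<in>V'. scM (if \<phi> u = v' then 1 else 0) (W' v' v))"
      using hyp[OF u v] M.sum_ind_scale[OF V(1)] M.sum_delta_scale'[OF V'(1) phi[OF u], of "\<lambda>_. 1"]
      by simp
  qed
  thus ?thesis using N.sum_ind_scale[OF V(1)] N.sum_delta_scale'[OF V'(1) phi[OF uv(1)], of "\<lambda>_. 1"]
    by simp
qed

lemma embedding_V:
  assumes V: "finite V" "V \<noteq> {}" "bij_betw e V {..<card V}"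
  and V': "finite V'" "V' \<noteq> {}" "bij_betw e' V' {..<card V'}"
  and psi: "\<And>u. u \<in> V' \<Longrightarrow> \<psi> u \<in> V"
  and hyp: "\<And>u v. u\<in>V \<Longrightarrow> v\<in>V' \<Longrightarrow> W u (\<psi> v) = (\<Sum>v'\<in>{v'\<in>V'. \<psi> v' = u}. W' v' v)"
  and uv: "u \<in> V" "v \<in> V'"
  shows "Fv e V W u (\<psi> v) = (\<Sum>v'\<in>{v'\<in>V'. \<psi> v' = u}. Fv e' V' W' v' v)"
proof -
  have "(\<Sum>u'\<in>V. scN (if u' = \<psi> v then 1 else 0) (Fv e V W u u')) =
        (\<Sum>v'\<in>V'. scN (if u = \<psi> v' then 1 else 0) (Fv e' V' W' v' v))"
  proof (rule intertwine_V[OF V V' _ uv])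
    fix u v assume u: "u\<in>V" and v: "v\<in>V'"
    show "(\<Sum>u'\<in>V. scM (if u' = \<psi> v then 1 else 0) (W u u')) =
          (\<Sum>v'\<in>V'. scM (if u = \<psi> v' then 1 else 0) (W' v' v))"
      using hyp[OF u v] M.sum_ind_scale[OF V'(1)] M.sum_delta_scale[OF V(1) psi[OF v], of "\<lambda>_. 1"]
      by (simp add: eq_commute[of u])
  qed
  thus ?thesis using N.sum_ind_scale[OF V'(1)] N.sum_delta_scale[OF V(1) psi[OF uv(2)], of "\<lambda>_. 1"]
    by (simp add: eq_commute[of u])
qed

lemma diagonal_V:
  assumes V: "finite V" "V \<noteq> {}" "bij_betw e V {..<card V}"
  and hyp: "\<And>u v. u\<in>V \<Longrightarrow> v\<in>V \<Longrightarrow> scM (d v) (W u v) = scM (d u) (W' u v)"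
  and uv: "u \<in> V" "v \<in> V"
  shows "scN (d v) (Fv e V W u v) = scN (d u) (Fv e V W' u v)"
proof -
  have "(\<Sum>u'\<in>V. scN (if u' = v then d u' else 0) (Fv e V W u u')) =
        (\<Sum>v'\<in>V. scN (if u = v' then d u else 0) (Fv e V W' v' v))"
  proof (rule intertwine_V[OF V V _ uv])
    fix u v assume u: "u\<in>V" and v: "v\<in>V"
    show "(\<Sum>u'\<in>V. scM (if u' = v then d u' else 0) (W u u')) =
          (\<Sum>v'\<in>V. scM (if u = v' then d u else 0) (W' v' v))"
      using hyp[OF u v] M.sum_delta_scale[OF V(1) v, of d] M.sum_delta_scale'[OF V(1) u, of "\<lambda>_. d u"]
      by simp
  qed
  thus ?thesis using N.sum_delta_scale[OF V(1) uv(2), of d] N.sum_delta_scale'[OF V(1) uv(1), of "\<lambda>_. d u"]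
    by simp
qed

end

context vector_space begin

lemma swap_tri: "(\<Sum>k\<le>Suc d. \<Sum>p<k. g p k) = (\<Sum>p\<le>d. \<Sum>k\<in>{Suc p..Suc d}. g p k)"
proof -
  have "(\<Sum>k\<le>Suc d. \<Sum>p<k. g p k) = (\<Sum>k\<in>{..Suc d}. \<Sum>p\<in>{p\<in>{..d}. p < k}. g p k)"
    by (rule sum.cong[OF refl], rule sum.cong) auto
  also have "\<dots> = (\<Sum>p\<in>{..d}. \<Sum>k\<in>{k\<in>{..Suc d}. p < k}. g p k)"
    by (rule sum.swap_restrict) auto
  also have "\<dots> = (\<Sum>p\<le>d. \<Sum>k\<in>{Suc p..Suc d}. g p k)"
    by (rule sum.cong[OF refl], rule sum.cong) auto
  finally show ?thesis .
qed

lemma poly_zero: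
  assumes inf: "infinite (UNIV::'a set)"
  shows "finite F \<Longrightarrow> (\<And>t. t \<notin> F \<Longrightarrow> (\<Sum>k\<le>d. (t^k) *s a k) = 0) \<Longrightarrow> k \<le> d \<Longrightarrow> a k = 0"
proof (induction d arbitrary: a F k)
  case 0
  obtain t where "t \<notin> F" using ex_new_if_finite[OF inf 0(1)] by blast
  then show ?case using 0(2)[of t] 0(3) by simp
next
  case (Suc d)
  obtain t0 where t0: "t0 \<notin> F" using ex_new_if_finite[OF inf Suc.prems(1)] by blast
  define b where "b j = (\<Sum>k\<in>{Suc j..Suc d}. (t0^(k - Suc j)) *s a k)" for j
  have key: "(\<Sum>k\<le>Suc d. (t^k) *s a k) - (\<Sum>k\<le>Suc d. (t0^k) *s a k) = (t - t0) *s (\<Sum>j\<le>d. (t^j) *s b j)" for t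
  proof -
    have pw: "t^k - t0^k = (t - t0) * (\<Sum>p<k. t^p * t0^(k - Suc p))" for k
    proof (cases k)
      case (Suc n) then show ?thesis using diff_power_eq_sum[of t n t0] by (simp add: Suc_diff_Suc)
    qed simp
    have "(\<Sum>k\<le>Suc d. (t^k) *s a k) - (\<Sum>k\<le>Suc d. (t0^k) *s a k) = (\<Sum>k\<le>Suc d. (t^k - t0^k) *s a k)"
      by (simp add: sum_subtractf scale_left_diff_distrib)
    also have "\<dots> = (\<Sum>k\<le>Suc d. (t - t0) *s (\<Sum>p<k. (t^p * t0^(k - Suc p)) *s a k))"
      by (intro sum.cong refl) (simp only: pw scale_scale[symmetric] scale_sum_left)
    also have "\<dots> = (t - t0) *s (\<Sum>k\<le>Suc d. \<Sum>p<k. (t^p * t0^(k - Suc p)) *s a k)"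
      by (simp only: scale_sum_right)
    also have "(\<Sum>k\<le>Suc d. \<Sum>p<k. (t^p * t0^(k - Suc p)) *s a k) = (\<Sum>p\<le>d. \<Sum>k\<in>{Suc p..Suc d}. (t^p * t0^(k - Suc p)) *s a k)"
      by (rule swap_tri)
    also have "\<dots> = (\<Sum>j\<le>d. (t^j) *s b j)"
      unfolding b_def by (intro sum.cong refl) (simp only: scale_sum_right scale_scale)
    finally show ?thesis .
  qed
  have bz: "b j = 0" if "j \<le> d" for j
  proof (rule Suc.IH[of "insert t0 F" b j])
    show "finite (insert t0 F)" using Suc.prems(1) by simp
    fix t assume t: "t \<notin> insert t0 F"
    have "(t - t0) *s (\<Sum>j\<le>d. (t^j) *s b j) = 0"
      using key[of t] Suc.prems(2)[of t] Suc.prems(2)[OF t0] t by simp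
    thus "(\<Sum>j\<le>d. (t^j) *s b j) = 0" using t by simp
  qed (use that in simp)
  have aSuc: "a (Suc d) = 0" using bz[of d] by (simp add: b_def)
  show ?case
  proof (cases "k = Suc d")
    case True then show ?thesis using aSuc by simp
  next
    case False
    show ?thesis
    proof (rule Suc.IH[of F a k])
      fix t assume "t \<notin> F"
      thus "(\<Sum>k\<le>d. (t^k) *s a k) = 0" using Suc.prems(2)[of t] aSuc by simp
    qed (use Suc.prems False in auto)
  qed
qed

end

lemma sum_single: "finite A \<Longrightarrow> x \<in> A \<Longrightarrow> (\<And>y. y \<in> A \<Longrightarrow> y \<noteq> x \<Longrightarrow> g y = 0) \<Longrightarrow> sum g A = g x"
  by (simp add: sum.remove sum.neutral)

lemma obtain_enc: assumes "finite V" obtains e where "bij_betw e V {..<card V}"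
  using ex_bij_betw_finite_nat[OF assms] by (auto simp: atLeast0LessThan)

locale ncsB = ncs +
  fixes B :: nat
  assumes inf0: "infinite {t. scM t = scM t}"
  and slices: "\<And>n Y Z. n>0 \<Longrightarrow> Y\<in>mats n \<Longrightarrow> Z\<in>mats n \<Longrightarrow>
     \<exists>c. \<forall>t. f n (\<lambda>i j. Y i j + scM t (Z i j)) = (\<lambda>i j. \<Sum>k\<le>B. scN (t^k) (c k i j))"
begin

lemma slices_V:
  assumes V: "finite V" "V \<noteq> {}" "bij_betw e V {..<card V}"
  shows "\<exists>c. \<forall>t u v. u\<in>V \<longrightarrow> v\<in>V \<longrightarrow> Fv e V (\<lambda>u v. W0 u v + scM t (W1 u v)) u v = (\<Sum>k\<le>B. scN (t^k) (c k u v))"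
proof -
  have m: "card V > 0" using V by (auto simp: card_gt_0_iff)
  obtain c where c: "\<And>t. f (card V) (\<lambda>i j. matv e V W0 i j + scM t (matv e V W1 i j)) = (\<lambda>i j. \<Sum>k\<le>B. scN (t^k) (c k i j))"
    using slices[OF m matv_mats matv_mats] by blast
  have mv: "matv e V (\<lambda>u v. W0 u v + scM t (W1 u v)) = (\<lambda>i j. matv e V W0 i j + scM t (matv e V W1 i j))" for t
    by (auto simp: matv_def fun_eq_iff)
  show ?thesis
    by (rule exI[of _ "\<lambda>k u v. c k (e u) (e v)"]) (simp add: Fv_def mv c)
qed

lemma scaling_vanish:
  assumes V: "finite V" "V \<noteq> {}" "bij_betw e V {..<card V}"
  and W0: "\<And>u v. u\<in>V \<Longrightarrow> v\<in>V \<Longrightarrow> W0 u v = 0 \<or> \<delta> u = \<delta> v"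
  and W1: "\<And>u v. u\<in>V \<Longrightarrow> v\<in>V \<Longrightarrow> W1 u v = 0 \<or> \<delta> v = Suc (\<delta> u)"
  and uv: "u \<in> V" "v \<in> V" and deg: "\<delta> v > \<delta> u + B"
  shows "Fv e V (\<lambda>u v. W0 u v + W1 u v) u v = 0"
proof -
  let ?W = "\<lambda>t u v. W0 u v + scM t (W1 u v)"
  let ?g = "Fv e V (?W 1) u v"
  define N where "N = \<delta> v - \<delta> u"
  have NB: "N > B" using deg by (simp add: N_def)
  have hom: "Fv e V (?W s) u v = scN (s^N) ?g" if s: "s \<noteq> 0" for s
  proof -
    have "scN (s^(\<delta> v)) (Fv e V (?W 1) u v) = scN (s^(\<delta> u)) (Fv e V (?W (s * 1)) u v)"
    proof (rule diagonal_V[OF V _ uv])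
      fix u v assume u: "u\<in>V" and v: "v\<in>V"
      show "scM (s ^ \<delta> v) (?W 1 u v) = scM (s ^ \<delta> u) (?W (s*1) u v)"
        using W0[OF u v] W1[OF u v]
        by (auto simp: M.scale_right_distrib M.scale_scale mult.commute)
    qed
    moreover have "scN (s^(\<delta> u)) (scN (s^N) ?g) = scN (s^(\<delta> v)) ?g"
      using deg by (simp only: N.scale_scale power_add[symmetric] N_def) simp
    ultimately have "scN (s^(\<delta> u)) (scN (s^N) ?g) = scN (s^(\<delta> u)) (Fv e V (?W s) u v)"
      by simp
    hence "scN (s^N) ?g = Fv e V (?W s) u v \<or> s^(\<delta> u) = 0" by (simp only: N.scale_cancel_left)
    thus ?thesis using s by auto
  qed
  obtain c where c: "\<And>t. Fv e V (?W t) u v = (\<Sum>k\<le>B. scN (t^k) (c k u v))"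
    using slices_V[OF V, of W0 W1] uv by blast
  define a where "a k = (if k = N then - ?g else if k \<le> B then c k u v else 0)" for k
  have hyp: "(\<Sum>k\<le>N. scN (s^k) (a k)) = 0" if s: "s \<noteq> 0" for s
  proof -
    have "(\<Sum>k\<le>N. scN (s^k) (a k)) = (\<Sum>k\<in>{..B}. scN (s^k) (a k)) + scN (s^N) (a N)"
    proof -
      have "(\<Sum>k\<le>N. scN (s^k) (a k)) = (\<Sum>k\<in>insert N {..B}. scN (s^k) (a k))"
        by (rule sum.mono_neutral_right) (use NB in \<open>auto simp: a_def\<close>)
      thus ?thesis using NB by (simp add: add.commute)
    qed
    also have "(\<Sum>k\<in>{..B}. scN (s^k) (a k)) = Fv e V (?W s) u v"
      using NB by (simp add: c a_def)
    also have "\<dots> = scN (s^N) ?g" by (rule hom[OF s])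
    finally show "(\<Sum>k\<le>N. scN (s^k) (a k)) = 0" by (simp add: a_def)
  qed
  have "a N = 0"
    by (rule N.poly_zero[OF inf0[simplified], where F="{0}" and d=N and a=a]) (use hyp in auto)
  hence "?g = 0" by (simp add: a_def)
  thus ?thesis by simp
qed

end

definition Jm :: "'m list \<Rightarrow> nat \<Rightarrow> nat \<Rightarrow> 'm::zero" where
  "Jm xs i j = (if i < length xs \<and> j = Suc i then xs ! i else 0)"

lemma Jm_mats: "Jm xs \<in> mats (Suc (length xs))" by (auto simp: Jm_def mats_def)

definition WA :: "nat \<Rightarrow> nat \<Rightarrow> 'm list \<Rightarrow> 'm \<Rightarrow> 'm \<Rightarrow> (nat + nat \<times> bool) \<Rightarrow> (nat + nat \<times> bool) \<Rightarrow> 'm::zero" where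
"WA i l xs x y u v = (case u of Inl a \<Rightarrow> (case v of Inl b \<Rightarrow> if b = Suc a \<and> b \<le> i then xs!a else 0
    | Inr (b,\<beta>) \<Rightarrow> if a = i \<and> b = Suc i then (if \<beta> then x else y) else 0)
  | Inr (a,\<alpha>) \<Rightarrow> (case v of Inl b \<Rightarrow> 0 | Inr (b,\<beta>) \<Rightarrow> if \<alpha> = \<beta> \<and> b = Suc a \<and> b \<le> l then xs!a else 0))"

lemma WA_simps [simp]:
  "WA i l xs x y (Inl a) (Inl b) = (if b = Suc a \<and> b \<le> i then xs!a else 0)"
  "WA i l xs x y (Inl a) (Inr (b,\<beta>)) = (if a = i \<and> b = Suc i then (if \<beta> then x else y) else 0)"
  "WA i l xs x y (Inr (a,\<alpha>)) (Inl b) = 0"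
  "WA i l xs x y (Inr (a,\<alpha>)) (Inr (b,\<beta>)) = (if \<alpha> = \<beta> \<and> b = Suc a \<and> b \<le> l then xs!a else 0)"
  by (simp_all add: WA_def)

definition VA :: "nat \<Rightarrow> nat \<Rightarrow> (nat + nat \<times> bool) set" where
  "VA i l = Inl ` {..i} \<union> Inr ` ({Suc i..l} \<times> UNIV)"

lemma VA_finite: "finite (VA i l)" by (simp add: VA_def)

definition phiA :: "(nat + nat \<times> bool) \<Rightarrow> nat" where
  "phiA u = (case u of Inl a \<Rightarrow> a | Inr (a, _) \<Rightarrow> a)"

definition psiA :: "nat \<Rightarrow> bool \<Rightarrow> nat \<Rightarrow> (nat + nat \<times> bool)" where
  "psiA i \<beta> t = (if t \<le> i then Inl t else Inr (t, \<beta>))"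

lemma in_VA: "u \<in> VA i l \<longleftrightarrow> (\<exists>a. u = Inl a \<and> a \<le> i) \<or> (\<exists>a \<alpha>. u = Inr (a,\<alpha>) \<and> Suc i \<le> a \<and> a \<le> l)"
  by (auto simp: VA_def)

lemma fiberA: "v \<le> l \<Longrightarrow> {u'\<in>VA i l. phiA u' = v} = (if v \<le> i then {Inl v} else {Inr (v,True), Inr (v,False)})"
  apply (rule set_eqI)
  subgoal for u by (cases u) (auto simp: in_VA phiA_def)
  done

context ncsB begin

definition pp where
  "pp l xs = f (Suc l) (Jm xs) 0 l"

lemma Fv_J: "length xs = l \<Longrightarrow> Fv id {..<Suc l} (Jm xs) a b = f (Suc l) (Jm xs) a b"
  using Fv_id[OF Jm_mats, of xs] by simp

lemma bij_id_l: "bij_betw id {..<Suc l} {..<card {..<Suc (l::nat)}}" by simp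

lemma pp_homog:
  assumes l: "length xs = l" and i: "i < l"
  shows "pp l (xs[i := scM c x]) = scN c (pp l (xs[i := x]))"
proof -
  let ?d = "\<lambda>t. if t \<le> i then 1 else c"
  have "scN (?d l) (Fv id {..<Suc l} (Jm (xs[i := x])) 0 l) = scN (?d 0) (Fv id {..<Suc l} (Jm (xs[i := scM c x])) 0 l)"
  proof (rule diagonal_V[OF finite_lessThan _ bij_id_l])
    fix u v assume "u \<in> {..<Suc l}" "v \<in> {..<Suc l}"
    show "scM (?d v) (Jm (xs[i := x]) u v) = scM (?d u) (Jm (xs[i := scM c x]) u v)"
      using l i by (cases "u = i") (auto simp: Jm_def nth_list_update)
  qed auto
  thus ?thesis using i l by (simp add: Fv_J pp_def)
qed

lemma pp_add:
  assumes l: "length xs = l" and i: "i < l"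
  shows "pp l (xs[i := x + y]) = pp l (xs[i := x]) + pp l (xs[i := y])"
proof -
  let ?V = "VA i l"
  let ?W = "WA i l xs x y"
  have V: "finite ?V" "?V \<noteq> {}" using VA_finite by (auto simp: VA_def)
  obtain e where e: "bij_betw e ?V {..<card ?V}" using obtain_enc[OF V(1)] by blast
  have V': "finite {..<Suc l}" "{..<Suc l} \<noteq> {}" by auto
  have r0: "Inl 0 \<in> ?V" by (simp add: VA_def)
  have fib: "(\<Sum>u'\<in>{u'\<in>?V. phiA u' = l}. Fv e ?V ?W (Inl 0) u') = Fv id {..<Suc l} (Jm (xs[i := x + y])) (phiA (Inl 0)) l"
  proof (rule fibration_V[OF V e V' bij_id_l _ _ r0])
    fix u assume "u \<in> ?V" thus "phiA u \<in> {..<Suc l}" using i by (auto simp: VA_def phiA_def)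
  next
    fix u v assume u: "u \<in> ?V" and v: "v \<in> {..<Suc l}"
    show "(\<Sum>u'\<in>{u'\<in>?V. phiA u' = v}. ?W u u') = Jm (xs[i := x + y]) (phiA u) v"
      using u v l i unfolding fiberA[of v l i, OF less_Suc_eq_le[THEN iffD1, OF v[simplified]]]
      by (cases "v \<le> i") (auto simp: in_VA phiA_def Jm_def nth_list_update)
  qed simp
  have emb: "Fv e ?V ?W (Inl 0) (psiA i \<beta> l) = Fv id {..<Suc l} (Jm (xs[i := (if \<beta> then x else y)])) 0 l" for \<beta>
  proof -
    have "Fv e ?V ?W (psiA i \<beta> 0) (psiA i \<beta> l) = (\<Sum>v'\<in>{v'\<in>{..<Suc l}. psiA i \<beta> v' = psiA i \<beta> 0}. Fv id {..<Suc l} (Jm (xs[i := (if \<beta> then x else y)])) v' l)"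
    proof (rule embedding_V[OF V e V' bij_id_l])
      fix u assume "u \<in> {..<Suc l}" thus "psiA i \<beta> u \<in> ?V" by (auto simp: VA_def psiA_def)
    next
      fix u v assume u: "u \<in> ?V" and v: "v \<in> {..<Suc l}"
      have fs: "{v'\<in>{..<Suc l}. psiA i \<beta> v' = u} = (case u of Inl a \<Rightarrow> {a} | Inr (a,\<alpha>) \<Rightarrow> if \<alpha> = \<beta> then {a} else {})"
        using u l i by (auto simp: in_VA psiA_def split: if_splits)
      show "?W u (psiA i \<beta> v) = (\<Sum>v'\<in>{v'\<in>{..<Suc l}. psiA i \<beta> v' = u}. Jm (xs[i := (if \<beta> then x else y)]) v' v)"
        unfolding fs using u v l i by (auto simp: in_VA psiA_def Jm_def nth_list_update)
    qed (auto simp: psiA_def VA_def)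
    moreover have "{v'\<in>{..<Suc l}. psiA i \<beta> v' = psiA i \<beta> 0} = {0}" by (auto simp: psiA_def)
    ultimately show ?thesis by (simp add: psiA_def)
  qed
  have "pp l (xs[i := x + y]) = Fv id {..<Suc l} (Jm (xs[i := x + y])) (phiA (Inl 0)) l"
    using l by (simp add: Fv_J pp_def phiA_def)
  also have "\<dots> = Fv e ?V ?W (Inl 0) (Inr (l,True)) + Fv e ?V ?W (Inl 0) (Inr (l,False))"
    using fib[symmetric] i by (simp add: fiberA)
  also have "\<dots> = pp l (xs[i := x]) + pp l (xs[i := y])"
    using emb[of True] emb[of False] i l by (simp add: psiA_def Fv_J pp_def)
  finally show ?thesis .
qed

lemma pp_multilinear: "multilinear scM scN l (pp l)"
  unfolding multilinear_def Vector_Spaces.linear_def module_hom_iff module_iff_vector_space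
  using pp_add pp_homog M.vector_space_axioms N.vector_space_axioms by auto

end

definition Tr :: "nat \<Rightarrow> nat \<Rightarrow> nat \<Rightarrow> nat list set" where
  "Tr n B i0 = {js. js \<noteq> [] \<and> hd js = i0 \<and> set js \<subseteq> {..<n} \<and> length js \<le> Suc B}"

definition VB :: "nat \<Rightarrow> nat \<Rightarrow> nat \<Rightarrow> (nat list + nat) set" where
  "VB n B i0 = Inl ` Tr n B i0 \<union> Inr ` {..<n}"

definition W0B :: "(nat \<Rightarrow> nat \<Rightarrow> 'm::zero) \<Rightarrow> (nat list + nat) \<Rightarrow> (nat list + nat) \<Rightarrow> 'm" where
  "W0B X u v = (case u of Inr a \<Rightarrow> (case v of Inr b \<Rightarrow> X a b | Inl _ \<Rightarrow> 0) | Inl _ \<Rightarrow> 0)"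

definition W1B :: "nat \<Rightarrow> (nat \<Rightarrow> nat \<Rightarrow> 'm::zero) \<Rightarrow> (nat list + nat) \<Rightarrow> (nat list + nat) \<Rightarrow> 'm" where
  "W1B B X u v = (case u of Inr a \<Rightarrow> 0 | Inl js \<Rightarrow> (case v of
       Inl js' \<Rightarrow> if butlast js' = js then X (last js) (last js') else 0
     | Inr b \<Rightarrow> if length js = Suc B then X (last js) b else 0))"

lemma W0B_simps[simp]: "W0B X (Inr a) (Inr b) = X a b" "W0B X (Inl js) v = 0" "W0B X u (Inl js) = 0"
  by (auto simp: W0B_def split: sum.splits)

lemma W1B_simps[simp]: "W1B B X (Inr a) v = 0"
  "W1B B X (Inl js) (Inl js') = (if butlast js' = js then X (last js) (last js') else 0)"
  "W1B B X (Inl js) (Inr b) = (if length js = Suc B then X (last js) b else 0)"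
  by (auto simp: W1B_def)

definition phiB :: "(nat list + nat) \<Rightarrow> nat" where
  "phiB u = (case u of Inl js \<Rightarrow> last js | Inr b \<Rightarrow> b)"

definition deltaB :: "nat \<Rightarrow> (nat list + nat) \<Rightarrow> nat" where
  "deltaB B u = (case u of Inl js \<Rightarrow> length js - 1 | Inr b \<Rightarrow> Suc B)"

lemma Tr_finite: "finite (Tr n B i0)"
proof -
  have "Tr n B i0 \<subseteq> {js. set js \<subseteq> {..<n} \<and> length js \<le> Suc B}" by (auto simp: Tr_def)
  thus ?thesis using finite_lists_length_le[of "{..<n}" "Suc B"] finite_subset by blast
qed

lemma VB_finite: "finite (VB n B i0)" by (simp add: VB_def Tr_finite)

lemma root_Tr: "i0 < n \<Longrightarrow> [i0] \<in> Tr n B i0" by (simp add: Tr_def)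

lemma in_VB: "u \<in> VB n B i0 \<longleftrightarrow> (\<exists>js. u = Inl js \<and> js \<in> Tr n B i0) \<or> (\<exists>b. u = Inr b \<and> b < n)"
  by (auto simp: VB_def)

lemma fiberB: "{u'\<in>VB n B i0. phiB u' = v} = Inl ` {js\<in>Tr n B i0. last js = v} \<union> (if v < n then {Inr v} else {})"
  apply (rule set_eqI)
  subgoal for u by (cases u) (auto simp: in_VB phiB_def)
  done

definition chainlen :: "nat list \<Rightarrow> nat" where "chainlen js = length js - 1"

lemma chain_length: "length (chain X js) = length js - 1" by (simp add: chain_def)
lemma chain_nth: "t < length js - 1 \<Longrightarrow> chain X js ! t = X (js ! t) (js ! Suc t)"
  by (simp add: chain_def)

lemma take_Suc_last: "t < length js \<Longrightarrow> last (take (Suc t) js) = js ! t"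
  by (simp add: take_Suc_conv_app_nth)
lemma take_Suc_butlast: "t < length js \<Longrightarrow> butlast (take (Suc t) js) = take t js"
  by (simp add: take_Suc_conv_app_nth)

lemma take_eq_iff: "a \<le> length js \<Longrightarrow> b \<le> length js \<Longrightarrow> take a js = take b js \<longleftrightarrow> a = b"
  by (metis length_take min.absorb2)

context ncsB begin

lemma big_embed:
  assumes n: "i0 < n" and js: "js \<in> Tr n B i0" and e: "bij_betw e (VB n B i0) {..<card (VB n B i0)}"
  shows "Fv e (VB n B i0) (\<lambda>u v. W0B X u v + W1B B X u v) (Inl [i0]) (Inl js) = pp (length js - 1) (chain X js)"
proof -
  define l where "l = length js - 1"
  have jsne: "js \<noteq> []" and hd: "hd js = i0" using js by (auto simp: Tr_def)
  have lenjs: "length js = Suc l" using jsne by (simp add: l_def)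
  let ?psi = "\<lambda>t. Inl (take (Suc t) js) :: nat list + nat"
  let ?xs = "chain X js"
  have lxs: "length ?xs = l" by (simp add: chain_length l_def)
  have Vne: "VB n B i0 \<noteq> {}" using root_Tr[OF n] by (auto simp: VB_def)
  have psiV: "?psi t \<in> VB n B i0" if "t \<in> {..<Suc l}" for t
  proof -
    have "take (Suc t) js \<in> Tr n B i0"
      using js jsne by (auto simp: Tr_def hd_take dest: in_set_takeD)
    thus ?thesis by (simp add: VB_def)
  qed
  have "Fv e (VB n B i0) (\<lambda>u v. W0B X u v + W1B B X u v) (?psi 0) (?psi l) =
    (\<Sum>v'\<in>{v'\<in>{..<Suc l}. ?psi v' = ?psi 0}. Fv id {..<Suc l} (Jm ?xs) v' l)"
  proof (rule embedding_V[OF VB_finite Vne e finite_lessThan _ bij_id_l psiV])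
    fix u t assume u: "u \<in> VB n B i0" and t: "t \<in> {..<Suc l}"
    have tl: "t < length js" using t lenjs by simp
    show "W0B X u (?psi t) + W1B B X u (?psi t) = (\<Sum>t'\<in>{t'\<in>{..<Suc l}. ?psi t' = u}. Jm ?xs t' t)"
    proof (cases u)
      case (Inr a) then show ?thesis by simp
    next
      case (Inl js0)
      have js0: "js0 \<in> Tr n B i0" using u Inl by (auto simp: in_VB)
      have LHS: "W0B X u (?psi t) + W1B B X u (?psi t) = (if take t js = js0 then X (last js0) (js ! t) else 0)"
        using Inl tl by (simp add: take_Suc_butlast take_Suc_last)
      show ?thesis
      proof (cases "\<exists>t'<Suc l. take (Suc t') js = js0")
        case True
        then obtain t' where t': "t' < Suc l" "take (Suc t') js = js0" by blast
        have set: "{t''\<in>{..<Suc l}. ?psi t'' = u} = {t'}"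
          using t' Inl lenjs by (auto simp: take_eq_iff)
        have "take t js = js0 \<longleftrightarrow> t = Suc t'"
          using t'(2)[symmetric] take_eq_iff[of t js "Suc t'"] t'(1) tl lenjs by simp
        moreover have "last js0 = js ! t' \<and> t' < l" if tt: "t = Suc t'"
        proof
          show "t' < l" using tt tl lenjs by simp
          show "last js0 = js ! t'" using t'(2)[symmetric] take_Suc_last[of t' js] tl tt by simp
        qed
        ultimately have "(if take t js = js0 then X (last js0) (js ! t) else 0) = (\<Sum>t''\<in>{t'}. Jm ?xs t'' t)"
        proof (cases "t = Suc t'")
          case True
          assume eq: "(take t js = js0) = (t = Suc t')" and lst: "t = Suc t' \<Longrightarrow> last js0 = js ! t' \<and> t' < l"
          have a: "last js0 = js ! t'" "t' < l" using lst True by auto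
          have "Jm ?xs t' t = X (js ! t') (js ! t)"
            using a(2) True lxs chain_nth[of t' js X] lenjs by (simp add: Jm_def)
          thus ?thesis using eq True a by simp
        next
          case False
          assume eq: "(take t js = js0) = (t = Suc t')"
          thus ?thesis using False by (simp add: Jm_def)
        qed
        thus ?thesis by (simp only: LHS set)
      next
        case False
        have set: "{t''\<in>{..<Suc l}. ?psi t'' = u} = {}" using False Inl by auto
        have "take t js \<noteq> js0"
        proof
          assume a: "take t js = js0"
          hence "t \<noteq> 0" using js0 by (auto simp: Tr_def)
          hence "take (Suc (t - 1)) js = js0" "t - 1 < Suc l" using a t by auto
          thus False using False by blast
        qed
        thus ?thesis unfolding LHS set by simp
      qed
    qed
  qed (use lenjs psiV[of 0] in auto)
  moreover have "{v'\<in>{..<Suc l}. ?psi v' = ?psi 0} = {0}"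
    using lenjs by (auto simp: take_eq_iff)
  moreover have "take (Suc 0) js = [i0]" using jsne hd by (cases js) auto
  moreover have "take (Suc l) js = js" using lenjs by simp
  ultimately show ?thesis using Fv_J[OF lxs] by (simp add: pp_def l_def)
qed

lemma big_scaling:
  assumes n: "i0 < n" and k: "k < n" and e: "bij_betw e (VB n B i0) {..<card (VB n B i0)}"
  shows "Fv e (VB n B i0) (\<lambda>u v. W0B X u v + W1B B X u v) (Inl [i0]) (Inr k) = 0"
proof (rule scaling_vanish[OF VB_finite _ e, where \<delta> = "deltaB B"])
  show "VB n B i0 \<noteq> {}" using root_Tr[OF n] by (auto simp: VB_def)
next
  fix u v assume "u \<in> VB n B i0" "v \<in> VB n B i0"
  thus "W0B X u v = 0 \<or> deltaB B u = deltaB B v"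
    by (cases u; cases v) (auto simp: deltaB_def)
next
  fix u v assume "u \<in> VB n B i0" "v \<in> VB n B i0"
  thus "W1B B X u v = 0 \<or> deltaB B v = Suc (deltaB B u)"
    by (cases u; cases v) (auto simp: deltaB_def in_VB Tr_def)
qed (use n k root_Tr[OF n] in \<open>auto simp: VB_def deltaB_def\<close>)

lemma big_fibration:
  assumes n: "i0 < n" and X: "X \<in> mats n" and k: "k < n" and e: "bij_betw e (VB n B i0) {..<card (VB n B i0)}"
  shows "(\<Sum>u'\<in>{u'\<in>VB n B i0. phiB u' = k}. Fv e (VB n B i0) (\<lambda>u v. W0B X u v + W1B B X u v) (Inl [i0]) u') = f n X i0 k"
proof -
  have V': "finite {..<n}" "{..<n} \<noteq> {}" using n by auto
  have bn: "bij_betw id {..<n} {..<card {..<n}}" by simp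
  have "(\<Sum>u'\<in>{u'\<in>VB n B i0. phiB u' = k}. Fv e (VB n B i0) (\<lambda>u v. W0B X u v + W1B B X u v) (Inl [i0]) u')
      = Fv id {..<n} X (phiB (Inl [i0])) k"
  proof (rule fibration_V[OF VB_finite _ e V' bn])
    show "VB n B i0 \<noteq> {}" using root_Tr[OF n] by (auto simp: VB_def)
  next
    fix u assume "u \<in> VB n B i0" thus "phiB u \<in> {..<n}"
      by (auto simp: in_VB phiB_def Tr_def) (metis last_in_set subsetD lessThan_iff)
  next
    fix u v assume u: "u \<in> VB n B i0" and v: "v \<in> {..<n}"
    let ?g = "\<lambda>u'. W0B X u u' + W1B B X u u'"
    have fin: "finite {u'\<in>VB n B i0. phiB u' = v}" using VB_finite by simp
    show "(\<Sum>u'\<in>{u'\<in>VB n B i0. phiB u' = v}. ?g u') = X (phiB u) v"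
    proof (cases u)
      case (Inl js)
      have js: "js \<in> Tr n B i0" using u Inl by (auto simp: in_VB)
      show ?thesis
      proof (cases "length js = Suc B")
        case True
        have "(\<Sum>u'\<in>{u'\<in>VB n B i0. phiB u' = v}. ?g u') = ?g (Inr v)"
        proof (rule sum_single[OF fin])
          show "Inr v \<in> {u'\<in>VB n B i0. phiB u' = v}" using v by (simp add: in_VB phiB_def)
        next
          fix y assume y: "y \<in> {u'\<in>VB n B i0. phiB u' = v}" "y \<noteq> Inr v"
          show "?g y = 0"
          proof (cases y)
            case (Inl js')
            have "js' \<in> Tr n B i0" using y Inl by (auto simp: in_VB)
            hence "butlast js' \<noteq> js" using True by (auto simp: Tr_def)
            thus ?thesis using Inl \<open>u = Inl js\<close> by simp
          next
            case (Inr b) thus ?thesis using y by (auto simp: phiB_def)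
          qed
        qed
        thus ?thesis using Inl True by (simp add: phiB_def)
      next
        case False
        have js2: "js @ [v] \<in> Tr n B i0" using js False v by (auto simp: Tr_def)
        have "(\<Sum>u'\<in>{u'\<in>VB n B i0. phiB u' = v}. ?g u') = ?g (Inl (js @ [v]))"
        proof (rule sum_single[OF fin])
          show "Inl (js @ [v]) \<in> {u'\<in>VB n B i0. phiB u' = v}" using js2 by (simp add: in_VB phiB_def)
        next
          fix y assume y: "y \<in> {u'\<in>VB n B i0. phiB u' = v}" "y \<noteq> Inl (js @ [v])"
          show "?g y = 0"
          proof (cases y)
            case (Inl js')
            have js': "js' \<in> Tr n B i0" "last js' = v" using y Inl by (auto simp: in_VB phiB_def)
            have "butlast js' \<noteq> js"
            proof
              assume "butlast js' = js"
              hence "js' = js @ [v]" using js' append_butlast_last_id[of js'] by (auto simp: Tr_def)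
              thus False using y Inl by simp
            qed
            thus ?thesis using Inl \<open>u = Inl js\<close> by simp
          next
            case (Inr b) thus ?thesis using \<open>u = Inl js\<close> False by simp
          qed
        qed
        thus ?thesis using Inl by (simp add: phiB_def)
      qed
    next
      case (Inr a)
      have "(\<Sum>u'\<in>{u'\<in>VB n B i0. phiB u' = v}. ?g u') = ?g (Inr v)"
      proof (rule sum_single[OF fin])
        show "Inr v \<in> {u'\<in>VB n B i0. phiB u' = v}" using v by (simp add: in_VB phiB_def)
      next
        fix y assume y: "y \<in> {u'\<in>VB n B i0. phiB u' = v}" "y \<noteq> Inr v"
        thus "?g y = 0" using Inr by (cases y) (auto simp: phiB_def)
      qed
      thus ?thesis using Inr by (simp add: phiB_def)
    qed
  qed (use n k root_Tr[OF n] in \<open>auto simp: VB_def\<close>)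
  thus ?thesis using Fv_id[OF X] by (simp add: phiB_def)
qed

end

context ncsB begin

lemma expansion:
  assumes n: "n > 0" and X: "X \<in> mats n"
  shows "f n X = (\<lambda>i k. \<Sum>l\<le>B. odot n l X (pp l) i k)"
proof (intro ext)
  fix i k
  show "f n X i k = (\<Sum>l\<le>B. odot n l X (pp l) i k)"
  proof (cases "i < n \<and> k < n")
    case False
    thus ?thesis using f_mats[OF n X] by (auto simp: mats_def odot_def)
  next
    case True
    hence i: "i < n" and k: "k < n" by auto
    obtain e where e: "bij_betw e (VB n B i) {..<card (VB n B i)}" using obtain_enc[OF VB_finite] by blast
    let ?F = "Fv e (VB n B i) (\<lambda>u v. W0B X u v + W1B B X u v) (Inl [i])"
    let ?S = "{js\<in>Tr n B i. last js = k}"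
    have finS: "finite ?S" using Tr_finite by simp
    have "f n X i k = (\<Sum>u'\<in>{u'\<in>VB n B i. phiB u' = k}. ?F u')"
      using big_fibration[OF i X k e] by simp
    also have "\<dots> = (\<Sum>u'\<in>Inl ` ?S \<union> {Inr k}. ?F u')" using k by (simp add: fiberB)
    also have "\<dots> = (\<Sum>u'\<in>Inl ` ?S. ?F u') + ?F (Inr k)"
      using finS by (subst sum.union_disjoint) auto
    also have "?F (Inr k) = 0" by (rule big_scaling[OF i k e])
    also have "(\<Sum>u'\<in>Inl ` ?S. ?F u') = (\<Sum>js\<in>?S. ?F (Inl js))"
      by (simp add: sum.reindex)
    also have "\<dots> = (\<Sum>js\<in>?S. pp (length js - 1) (chain X js))"
      by (intro sum.cong refl) (simp add: big_embed[OF i _ e])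
    also have "\<dots> = (\<Sum>l\<in>{..B}. \<Sum>js\<in>{x\<in>?S. length x - 1 = l}. pp (length js - 1) (chain X js))"
      by (rule sum.group[symmetric, OF finS]) (auto simp: Tr_def)
    also have "\<dots> = (\<Sum>l\<le>B. odot n l X (pp l) i k)"
    proof (rule sum.cong[OF refl])
      fix l assume l: "l \<in> {..B}"
      have set: "{x\<in>?S. length x - 1 = l} = {js. length js = Suc l \<and> set js \<subseteq> {..<n} \<and> hd js = i \<and> last js = k}"
        using l by (auto simp: Tr_def)
      show "(\<Sum>js\<in>{x\<in>?S. length x - 1 = l}. pp (length js - 1) (chain X js)) = odot n l X (pp l) i k"
        unfolding set odot_def using i k by (auto intro!: sum.cong)
    qed
    finally show ?thesis by simp
  qed
qed

end

theorem theorem6p8: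
  fixes scM :: "'k::field \<Rightarrow> 'm::ab_group_add \<Rightarrow> 'm"
    and scN :: "'k \<Rightarrow> 'n::ab_group_add \<Rightarrow> 'n"
    and f :: "nat \<Rightarrow> (nat \<Rightarrow> nat \<Rightarrow> 'm) \<Rightarrow> (nat \<Rightarrow> nat \<Rightarrow> 'n)"
    and Ldeg :: "nat \<Rightarrow> nat"
  assumes "infinite (UNIV :: 'k set)"
    and "vector_space scM" and "vector_space scN"
    and "nc_function scM scN f"
    and "\<forall>n>0. poly_on_slices_deg scM scN f n (Ldeg n)"
    and "\<exists>B. \<forall>n>0. Ldeg n \<le> B"
  shows "\<exists>L::nat. \<exists>p :: nat \<Rightarrow> 'm list \<Rightarrow> 'n.
           (\<forall>l\<le>L. multilinear scM scN l (p l)) \<and>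
           (\<forall>n>0. \<forall>X\<in>mats n. f n X = (\<lambda>i k. \<Sum>l\<le>L. odot n l X (p l) i k))"
proof -
  obtain B where B: "\<forall>n>0. Ldeg n \<le> B" using assms(6) by blast
  interpret N: vector_space scN by fact
  have sl: "\<exists>c. \<forall>t. f n (\<lambda>i j. Y i j + scM t (Z i j)) = (\<lambda>i j. \<Sum>k\<le>B. scN (t^k) (c k i j))"
    if n: "n>0" and Y: "Y\<in>mats n" and Z: "Z\<in>mats n" for n Y Z
  proof -
    have "poly_on_slices_deg scM scN f n (Ldeg n)" using assms(5) n by auto
    then obtain c0 where "slice_poly scM scN f n Y Z (Ldeg n) c0"
      using Y Z unfolding poly_on_slices_deg_def by blast
    then obtain c where c: "\<forall>t. f n (\<lambda>i j. Y i j + scM t (Z i j)) = (\<lambda>i j. \<Sum>k\<le>Ldeg n. scN (t^k) (c k i j))"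
      unfolding slice_poly_def by blast
    have le: "Ldeg n \<le> B" using B n by auto
    show ?thesis
    proof (intro exI allI)
      fix t
      show "f n (\<lambda>i j. Y i j + scM t (Z i j)) = (\<lambda>i j. \<Sum>k\<le>B. scN (t^k) (if k \<le> Ldeg n then c k i j else 0))"
        unfolding c[rule_format]
      proof (intro ext)
        fix i j
        show "(\<Sum>k\<le>Ldeg n. scN (t^k) (c k i j)) = (\<Sum>k\<le>B. scN (t^k) (if k \<le> Ldeg n then c k i j else 0))"
          by (rule sum.mono_neutral_cong_left) (use le in auto)
      qed
    qed
  qed
  interpret ncsB scM scN f B
    by (intro ncsB.intro ncs.intro ncsB_axioms.intro ncs_axioms.intro assms(2,3,4)) (use assms(1) sl in auto)
  show ?thesis
    by (rule exI[of _ B], rule exI[of _ pp]) (use pp_multilinear expansion in auto)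
qed


end
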